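(* Let $(X,\|\cdot\|)$ be a Banach space, $B_X=\{x\in X:\|x\|\le1\}$ and $B=\{x\in X:\|x\|\ge2\}$. Suppose the ordered pair $(B_X,B)$ has the $UC$ property. If $\{x_n\}_{n=1}^\infty,\{z_n\}_{n=1}^\infty\subset B_X$ satisfy $\lim_{n\to\infty}\left\|\frac{x_n+z_n}{2}\right\|=1$, then $\lim_{n\to\infty}\|x_n-z_n\|=0$.
   Context: $\mathrm{dist}(A,B)=\inf\{\|a-b\|:a\in A,b\in B\}$. The ordered pair $(A,B)$ has the $UC$ property if for all sequences $\{x_n\},\{z_n\}\subset A$, $\{y_n\}\subset B$ with $\lim_n\|x_n-y_n\|=\lim_n\|z_n-y_n\|=\mathrm{dist}(A,B)$ one has $\lim_n\|x_n-z_n\|=0$. *)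

theory Defs
  imports "HOL-Analysis.Analysis"
begin

definition set_dist :: "'a::real_normed_vector set \<Rightarrow> 'a set \<Rightarrow> real" where
  "set_dist A B = Inf {norm (a - b) | a b. a \<in> A \<and> b \<in> B}"

definition UC_property :: "'a::real_normed_vector set \<Rightarrow> 'a set \<Rightarrow> bool" where
  "UC_property A B \<longleftrightarrow>
     (\<forall>x z y :: nat \<Rightarrow> 'a.
        (\<forall>n. x n \<in> A) \<longrightarrow> (\<forall>n. z n \<in> A) \<longrightarrow> (\<forall>n. y n \<in> B) \<longrightarrow>
        (\<lambda>n. norm (x n - y n)) \<longlonglongrightarrow> set_dist A B \<longrightarrow>
        (\<lambda>n. norm (z n - y n)) \<longlonglongrightarrow> set_dist A B \<longrightarrow>
        (\<lambda>n. norm (x n - z n)) \<longlonglongrightarrow> 0)"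

end

theory Submission
  imports Defs
begin

lemma key_bound:
  fixes x z :: "'a::real_normed_vector"
  assumes "norm z \<le> 1" and M: "M = norm ((x + z) /\<^sub>R 2)" and "M \<noteq> 0"
  shows "norm (x - (2 / M) *\<^sub>R ((x + z) /\<^sub>R 2)) \<le> 1 + 2 * \<bar>M - 1\<bar>"
proof -
  have eq: "x - (2 / M) *\<^sub>R ((x + z) /\<^sub>R 2) = - z + (1 - 1 / M) *\<^sub>R (x + z)"
    using assms(3) by (simp add: algebra_simps scaleR_diff_left)
  have nxz: "norm (x + z) = 2 * M" using M by simp
  have "norm ((1 - 1 / M) *\<^sub>R (x + z)) = \<bar>1 - 1/M\<bar> * (2 * M)" using nxz by simp
  also have "\<dots> = 2 * \<bar>M - 1\<bar>"
  proof -
    have "M > 0" using M assms(3) norm_ge_zero[of "(x + z) /\<^sub>R 2"] by linarith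
    then have "\<bar>1 - 1/M\<bar> * M = \<bar>M - 1\<bar>"
      by (metis abs_of_pos diff_divide_distrib divide_self_if abs_divide
                nonzero_mult_div_cancel_left mult.commute times_divide_eq_right
                order_less_irrefl)
    then show ?thesis by simp
  qed
  finally have "norm ((1 - 1 / M) *\<^sub>R (x + z)) = 2 * \<bar>M - 1\<bar>" .
  then show ?thesis unfolding eq
    using norm_triangle_ineq[of "-z" "(1 - 1 / M) *\<^sub>R (x + z)"] assms(1) by simp
qed

lemma lower_bound:
  fixes x y :: "'a::real_normed_vector"
  assumes "norm x \<le> 1" "norm y \<ge> 2"
  shows "norm (x - y) \<ge> 1"
  using norm_triangle_ineq2[of y x] assms by (simp add: norm_minus_commute)

theorem mainTheorem11:
  fixes x z :: "nat \<Rightarrow> 'a::banach"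
  assumes "UC_property {v :: 'a. norm v \<le> 1} {v. norm v \<ge> 2}"
    and "\<forall>n. norm (x n) \<le> 1" and "\<forall>n. norm (z n) \<le> 1"
    and "(\<lambda>n. norm ((x n + z n) /\<^sub>R 2)) \<longlonglongrightarrow> 1"
  shows "(\<lambda>n. norm (x n - z n)) \<longlonglongrightarrow> 0"
proof -
  define m where "m n = (x n + z n) /\<^sub>R 2" for n
  define M where "M n = norm (m n)" for n
  have MLim: "M \<longlonglongrightarrow> 1" using assms(4) unfolding M_def m_def .
  have evM: "eventually (\<lambda>n. M n > 1/2) sequentially"
    using order_tendstoD(1)[OF MLim, of "1/2"] by simp
  then obtain n0 where "M n0 > 1/2" by (metis eventually_sequentially order_refl)
  define e where "e = m n0 /\<^sub>R M n0"
  have ne: "norm e = 1" using \<open>M n0 > 1/2\<close> unfolding e_def M_def by (auto simp: field_simps)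
  define y where "y n = (if M n > 1/2 then (2 / M n) *\<^sub>R m n else 2 *\<^sub>R e)" for n
  have yB: "norm (y n) \<ge> 2" for n
    using ne by (auto simp: y_def M_def)
  have ev1: "eventually (\<lambda>n. y n = (2 / M n) *\<^sub>R m n) sequentially"
    using evM by eventually_elim (simp add: y_def)
  have sd: "set_dist {v :: 'a. norm v \<le> 1} {v. norm v \<ge> 2} = 1"
    unfolding set_dist_def
  proof (rule cInf_eq_minimum)
    show "1 \<in> {norm (a - b) |a b. a \<in> {v::'a. norm v \<le> 1} \<and> b \<in> {v. 2 \<le> norm v}}"
    proof -
      have "e - 2 *\<^sub>R e = - e" by (simp add: scaleR_2)
      then have "1 = norm (e - 2 *\<^sub>R e) \<and> e \<in> {v::'a. norm v \<le> 1} \<and> 2 *\<^sub>R e \<in> {v. 2 \<le> norm v}"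
        using ne by simp
      then show ?thesis by blast
    qed
  next
    fix t assume "t \<in> {norm (a - b) |a b. a \<in> {v::'a. norm v \<le> 1} \<and> b \<in> {v. 2 \<le> norm v}}"
    then show "1 \<le> t" using lower_bound by auto
  qed
  have up: "(\<lambda>n. 1 + 2 * \<bar>M n - 1\<bar>) \<longlonglongrightarrow> 1"
  proof -
    have "(\<lambda>n. 1 + 2 * \<bar>M n - 1\<bar>) \<longlonglongrightarrow> 1 + 2 * \<bar>1 - 1\<bar>"
      by (intro tendsto_intros MLim)
    then show ?thesis by simp
  qed
  have Lx: "(\<lambda>n. norm (x n - y n)) \<longlonglongrightarrow> 1"
  proof (rule tendsto_sandwich[OF _ _ tendsto_const up])
    show "\<forall>\<^sub>F n in sequentially. 1 \<le> norm (x n - y n)"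
      by (rule always_eventually) (use lower_bound assms(2) yB in blast)
    show "\<forall>\<^sub>F n in sequentially. norm (x n - y n) \<le> 1 + 2 * \<bar>M n - 1\<bar>"
      using evM ev1 proof eventually_elim
      case (elim n)
      have "M n = norm ((x n + z n) /\<^sub>R 2)" by (simp add: M_def m_def)
      then have "norm (x n - (2 / M n) *\<^sub>R ((x n + z n) /\<^sub>R 2)) \<le> 1 + 2 * \<bar>M n - 1\<bar>"
        using key_bound[of "z n" "M n" "x n"] assms(3) elim by force
      then show ?case using elim by (simp add: m_def)
    qed
  qed
  have Lz: "(\<lambda>n. norm (z n - y n)) \<longlonglongrightarrow> 1"
  proof (rule tendsto_sandwich[OF _ _ tendsto_const up])
    show "\<forall>\<^sub>F n in sequentially. 1 \<le> norm (z n - y n)"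
      by (rule always_eventually) (use lower_bound assms(3) yB in blast)
    show "\<forall>\<^sub>F n in sequentially. norm (z n - y n) \<le> 1 + 2 * \<bar>M n - 1\<bar>"
      using evM ev1 proof eventually_elim
      case (elim n)
      have "M n = norm ((z n + x n) /\<^sub>R 2)" by (simp add: M_def m_def add.commute)
      then have "norm (z n - (2 / M n) *\<^sub>R ((z n + x n) /\<^sub>R 2)) \<le> 1 + 2 * \<bar>M n - 1\<bar>"
        using key_bound[of "x n" "M n" "z n"] assms(2) elim by force
      then show ?case using elim by (simp add: m_def add.commute)
    qed
  qed
  show ?thesis
    using assms(1) unfolding UC_property_def sd
    using Lx Lz assms(2,3) yB by blast
qed

end
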